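(* Let $G=(V,E)$ be a finite undirected graph and $k\in\mathbb{N}$. For $v\in V$ let $N[v]=\{v\}\cup\{v'\in V:\{v,v'\}\in E\}$, let $L_v=(V^*vv)^\omega\cup(V^*(V\setminus N[v]))^\omega\subseteq V^\omega$, and $L_G=\bigcap_{v\in V}L_v$. If $G$ is $k$-colourable, then there exists a complete deterministic generalised Büchi automaton over the input alphabet $V$ with $k$ states recognising $L_G$.
   Context: A finite undirected graph is $G=(V,E)$ with $V$ finite and $E$ a set of 2-element subsets of $V$. A $k$-colouring is a map $c:V\to\{1,\dots,k\}$ with $c(v)\ne c(v')$ whenever $\{v,v'\}\in E$; $G$ is $k$-colourable if one exists. For a set $X$, $(X^*Y)^\omega$ denotes infinite concatenations of words of $X^*Y$. An automaton is a tuple $(Q,\Sigma,q_{\mathrm{init}},\Delta,\Gamma,\mathrm{col},W)$ with finite state set, finite input alphabet $\Sigma$, initial state, transitions $\Delta\subseteq Q\times\Sigma\times Q$, output alphabet $\Gamma$, labelling $\mathrm{col}:\Delta\to\Gamma$, acceptance condition $W\subseteq\Gamma^\omega$. A run on $w=a_1a_2\cdots$ is a sequence $(q_0,a_1,q_1)(q_1,a_2,q_2)\cdots$ of transitions with $q_0=q_{\mathrm{init}}$, accepting if its label sequence is in $W$; the recognised language is the set of words with an accepting run. A generalised Büchi automaton with finite output colour set $C$ has $\Gamma=2^C$ and $W=\{x : \text{every } c\in C \text{ occurs in infinitely many letters of } x\}$. Deterministic (resp. complete): for every $(p,a)\in Q\times\Sigma$ there is at most (resp. at least) one $q$ with $(p,a,q)\in\Delta$.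 *)

theory Defs
  imports Main
begin

definition finite_graph :: "'v set \<Rightarrow> 'v set set \<Rightarrow> bool" where
  "finite_graph V E \<longleftrightarrow> finite V \<and>
     (\<forall>e\<in>E. \<exists>a b. e = {a, b} \<and> a \<noteq> b \<and> a \<in> V \<and> b \<in> V)"

definition colouring :: "'v set \<Rightarrow> 'v set set \<Rightarrow> nat \<Rightarrow> ('v \<Rightarrow> nat) \<Rightarrow> bool" where
  "colouring V E k c \<longleftrightarrow> (\<forall>v\<in>V. c v \<in> {1..k}) \<and>
     (\<forall>v\<in>V. \<forall>v'\<in>V. {v, v'} \<in> E \<longrightarrow> c v \<noteq> c v')"

definition colourable :: "'v set \<Rightarrow> 'v set set \<Rightarrow> nat \<Rightarrow> bool" where
  "colourable V E k \<longleftrightarrow> (\<exists>c. colouring V E k c)"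

definition closed_nbhd :: "'v set \<Rightarrow> 'v set set \<Rightarrow> 'v \<Rightarrow> 'v set" where
  "closed_nbhd V E v = {v} \<union> {v'\<in>V. {v, v'} \<in> E}"

definition omega_words :: "'a set \<Rightarrow> (nat \<Rightarrow> 'a) set" where
  "omega_words S = {w. \<forall>i. w i \<in> S}"

definition star_conc :: "'a set \<Rightarrow> 'a list set \<Rightarrow> 'a list set" where
  "star_conc X Y = {u @ y | u y. set u \<subseteq> X \<and> y \<in> Y}"

text \<open>Infinite concatenation L^omega of nonempty words of L.\<close>
definition omega_iter :: "'a list set \<Rightarrow> (nat \<Rightarrow> 'a) set" where
  "omega_iter L = {w. \<exists>f. f 0 = 0 \<and> strict_mono f \<and>
       (\<forall>i. map w [f i..<f (Suc i)] \<in> L)}"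

definition L_v :: "'v set \<Rightarrow> 'v set set \<Rightarrow> 'v \<Rightarrow> (nat \<Rightarrow> 'v) set" where
  "L_v V E v = omega_iter (star_conc V {[v, v]})
             \<union> omega_iter (star_conc V {[x] | x. x \<in> V - closed_nbhd V E v})"

definition L_G :: "'v set \<Rightarrow> 'v set set \<Rightarrow> (nat \<Rightarrow> 'v) set" where
  "L_G V E = omega_words V \<inter> (\<Inter>v\<in>V. L_v V E v)"

definition is_gba :: "'q set \<Rightarrow> 'a set \<Rightarrow> 'q \<Rightarrow> ('q \<times> 'a \<times> 'q) set \<Rightarrow> 'c set
     \<Rightarrow> ('q \<times> 'a \<times> 'q \<Rightarrow> 'c set) \<Rightarrow> bool" where
  "is_gba Q Sig qi D C col \<longleftrightarrow> finite Q \<and> finite Sig \<and> qi \<in> Q \<and>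
     D \<subseteq> Q \<times> Sig \<times> Q \<and> finite C \<and> (\<forall>t\<in>D. col t \<subseteq> C)"

definition deterministic :: "'q set \<Rightarrow> 'a set \<Rightarrow> ('q \<times> 'a \<times> 'q) set \<Rightarrow> bool" where
  "deterministic Q Sig D \<longleftrightarrow>
     (\<forall>p\<in>Q. \<forall>a\<in>Sig. \<forall>q q'. (p, a, q) \<in> D \<and> (p, a, q') \<in> D \<longrightarrow> q = q')"

definition complete_aut :: "'q set \<Rightarrow> 'a set \<Rightarrow> ('q \<times> 'a \<times> 'q) set \<Rightarrow> bool" where
  "complete_aut Q Sig D \<longleftrightarrow> (\<forall>p\<in>Q. \<forall>a\<in>Sig. \<exists>q. (p, a, q) \<in> D)"

text \<open>A run on w is a state sequence r with r 0 = qi and (r i, w(i), r(i+1)) in D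
  (the paper's a_{i+1} is w i here, words being indexed from 0).\<close>
definition is_run :: "'q \<Rightarrow> ('q \<times> 'a \<times> 'q) set \<Rightarrow> (nat \<Rightarrow> 'a) \<Rightarrow> (nat \<Rightarrow> 'q) \<Rightarrow> bool" where
  "is_run qi D w r \<longleftrightarrow> r 0 = qi \<and> (\<forall>i. (r i, w i, r (Suc i)) \<in> D)"

definition gba_accepting :: "'c set \<Rightarrow> ('q \<times> 'a \<times> 'q \<Rightarrow> 'c set)
     \<Rightarrow> (nat \<Rightarrow> 'a) \<Rightarrow> (nat \<Rightarrow> 'q) \<Rightarrow> bool" where
  "gba_accepting C col w r \<longleftrightarrow>
     (\<forall>c\<in>C. \<exists>\<^sub>\<infinity>i. c \<in> col (r i, w i, r (Suc i)))"

definition gba_lang :: "'a set \<Rightarrow> 'q \<Rightarrow> ('q \<times> 'a \<times> 'q) set \<Rightarrow> 'c set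
     \<Rightarrow> ('q \<times> 'a \<times> 'q \<Rightarrow> 'c set) \<Rightarrow> (nat \<Rightarrow> 'a) set" where
  "gba_lang Sig qi D C col =
     {w \<in> omega_words Sig. \<exists>r. is_run qi D w r \<and> gba_accepting C col w r}"

end

theory Submission
  imports Defs "HOL-Library.Infinite_Set"
begin

lemma INFM_Suc_iff: "(\<exists>\<^sub>\<infinity>i. P (Suc i)) \<longleftrightarrow> (\<exists>\<^sub>\<infinity>i::nat. P i)"
  unfolding INFM_nat
  by (metis Suc_less_eq Suc_lessE less_Suc_eq)

lemma blk_end:
  assumes "map w [a..<b] = u @ y" "length y = l" "0 < l"
  shows "l \<le> b \<and> map w [b-l..<b] = y"
proof -
  have len: "b - a = length u + l" using assms by (metis length_append length_map length_upt)
  have "drop (length u) (map w [a..<b]) = y" using assms(1) by simp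
  moreover have "drop (length u) (map w [a..<b]) = map w [a + length u..<b]"
    by (simp add: drop_map)
  moreover have "a + length u = b - l" using len assms(3) by (cases "a < b") auto
  ultimately show ?thesis using len by simp
qed

lemma omega_iter_iff:
  assumes "w \<in> omega_words V" "\<forall>y\<in>Y. length y = l" "0 < l"
  shows "w \<in> omega_iter (star_conc V Y) \<longleftrightarrow> (\<exists>\<^sub>\<infinity>n. l \<le> n \<and> map w [n-l..<n] \<in> Y)"
    (is "_ \<longleftrightarrow> (\<exists>\<^sub>\<infinity>n. ?P n)")
proof
  assume "w \<in> omega_iter (star_conc V Y)"
  then obtain f where f: "f 0 = 0" "strict_mono f" "\<forall>i. map w [f i..<f (Suc i)] \<in> star_conc V Y"
    unfolding omega_iter_def by blast
  have P: "?P (f (Suc i))" for i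
  proof -
    obtain u y where "map w [f i..<f (Suc i)] = u @ y" "y \<in> Y"
      using f(3) unfolding star_conc_def by blast
    then show ?thesis using blk_end[of w "f i" "f (Suc i)" u y l] assms(2,3) by auto
  qed
  show "\<exists>\<^sub>\<infinity>n. ?P n" unfolding INFM_nat
  proof
    fix m
    have "m < f (Suc m)" using f(2)
      by (metis dual_order.strict_trans1 lessI strict_mono_imp_increasing)
    then show "\<exists>n>m. ?P n" using P by blast
  qed
next
  assume inf: "\<exists>\<^sub>\<infinity>n. ?P n"
  have ex: "\<exists>n. ?P n \<and> m + l \<le> n" for m
    using inf unfolding INFM_nat_le by blast
  define f where "f = rec_nat 0 (\<lambda>_ m. LEAST n. ?P n \<and> m + l \<le> n)"
  have f0: "f 0 = 0" by (simp add: f_def)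
  have fS: "f (Suc i) = (LEAST n. ?P n \<and> f i + l \<le> n)" for i by (simp add: f_def)
  have fP: "?P (f (Suc i)) \<and> f i + l \<le> f (Suc i)" for i
    unfolding fS using LeastI_ex[OF ex[of "f i"]] by blast
  have sm: "strict_mono f"
  proof -
    have "f i < f (Suc i)" for i using fP[of i] assms(3) by linarith
    then show ?thesis unfolding strict_mono_Suc_iff by blast
  qed
  have "map w [f i..<f (Suc i)] \<in> star_conc V Y" for i
  proof -
    let ?a = "f i" and ?b = "f (Suc i)"
    have le: "?a \<le> ?b - l" "l \<le> ?b" using fP[of i] by auto
    have "[?a..<?b] = [?a..<?b - l] @ [?b - l..<?b]"
      using le upt_add_eq_append[of ?a "?b - l" l] by simp
    then have "map w [?a..<?b] = map w [?a..<?b - l] @ map w [?b - l..<?b]" by simp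
    moreover have "set (map w [?a..<?b - l]) \<subseteq> V" using assms(1) unfolding omega_words_def by auto
    ultimately show ?thesis using fP[of i] unfolding star_conc_def by blast
  qed
  then show "w \<in> omega_iter (star_conc V Y)" unfolding omega_iter_def using f0 sm by blast
qed


lemma L_v_iff:
  assumes "w \<in> omega_words V"
  shows "w \<in> L_v V E v \<longleftrightarrow> (\<exists>\<^sub>\<infinity>i. w i = v \<and> w (Suc i) = v) \<or> (\<exists>\<^sub>\<infinity>i. w i \<in> V - closed_nbhd V E v)"
proof -
  have h1: "w \<in> omega_iter (star_conc V {[v, v]}) \<longleftrightarrow> (\<exists>\<^sub>\<infinity>n. 2 \<le> n \<and> map w [n-2..<n] \<in> {[v,v]})"
    by (rule omega_iter_iff[OF assms]) auto
  have "(\<exists>\<^sub>\<infinity>n. 2 \<le> n \<and> map w [n-2..<n] \<in> {[v,v]}) \<longleftrightarrow>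
        (\<exists>\<^sub>\<infinity>n. 2 \<le> Suc (Suc n) \<and> map w [Suc (Suc n)-2..<Suc (Suc n)] \<in> {[v,v]})"
    using INFM_Suc_iff[of "\<lambda>n. 2 \<le> n \<and> map w [n-2..<n] \<in> {[v,v]}"]
      INFM_Suc_iff[of "\<lambda>n. 2 \<le> Suc n \<and> map w [Suc n-2..<Suc n] \<in> {[v,v]}"] by simp
  also have "\<dots> \<longleftrightarrow> (\<exists>\<^sub>\<infinity>i. w i = v \<and> w (Suc i) = v)"
    by (simp add: upt_rec)
  finally have h1b: "w \<in> omega_iter (star_conc V {[v, v]}) \<longleftrightarrow> (\<exists>\<^sub>\<infinity>i. w i = v \<and> w (Suc i) = v)"
    using h1 by simp
  let ?S = "{[x] | x. x \<in> V - closed_nbhd V E v}"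
  have h2: "w \<in> omega_iter (star_conc V ?S) \<longleftrightarrow> (\<exists>\<^sub>\<infinity>n. 1 \<le> n \<and> map w [n-1..<n] \<in> ?S)"
    by (rule omega_iter_iff[OF assms]) auto
  have "(\<exists>\<^sub>\<infinity>n. 1 \<le> n \<and> map w [n-1..<n] \<in> ?S) \<longleftrightarrow>
        (\<exists>\<^sub>\<infinity>n. 1 \<le> Suc n \<and> map w [Suc n-1..<Suc n] \<in> ?S)"
    using INFM_Suc_iff[of "\<lambda>n. 1 \<le> n \<and> map w [n-1..<n] \<in> ?S"] by simp
  also have "\<dots> \<longleftrightarrow> (\<exists>\<^sub>\<infinity>i. w i \<in> V - closed_nbhd V E v)"
    by simp
  finally show ?thesis using h1b h2 unfolding L_v_def by blast
qed


lemma acc_iff: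
  assumes w: "w \<in> omega_words V" and v: "v \<in> V"
    and c: "colouring V E k c"
    and r: "\<And>i. r (Suc i) = c (w i)"
  shows "(\<exists>\<^sub>\<infinity>i. (w i = v \<and> r i = c v) \<or> (w i \<in> V \<and> w i \<notin> closed_nbhd V E v))
     \<longleftrightarrow> (\<exists>\<^sub>\<infinity>i. w i = v \<and> w (Suc i) = v) \<or> (\<exists>\<^sub>\<infinity>i. w i \<in> V - closed_nbhd V E v)"
proof
  assume "\<exists>\<^sub>\<infinity>i. (w i = v \<and> r i = c v) \<or> (w i \<in> V \<and> w i \<notin> closed_nbhd V E v)"
  then consider "\<exists>\<^sub>\<infinity>i. w i = v \<and> r i = c v" | "\<exists>\<^sub>\<infinity>i. w i \<in> V \<and> w i \<notin> closed_nbhd V E v"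
    unfolding INFM_disj_distrib by blast
  then show "(\<exists>\<^sub>\<infinity>i. w i = v \<and> w (Suc i) = v) \<or> (\<exists>\<^sub>\<infinity>i. w i \<in> V - closed_nbhd V E v)"
  proof cases
    case 1
    then have "\<exists>\<^sub>\<infinity>i. w (Suc i) = v \<and> r (Suc i) = c v"
      using INFM_Suc_iff[of "\<lambda>i. w i = v \<and> r i = c v"] by simp
    then have "\<exists>\<^sub>\<infinity>i. (w i = v \<and> w (Suc i) = v) \<or> (w i \<in> V - closed_nbhd V E v)"
    proof (rule INFM_mono)
      fix i assume h: "w (Suc i) = v \<and> r (Suc i) = c v"
      show "(w i = v \<and> w (Suc i) = v) \<or> (w i \<in> V - closed_nbhd V E v)"
      proof (cases "w i = v")
        case True then show ?thesis using h by simp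
      next
        case False
        have wi: "w i \<in> V" using w unfolding omega_words_def by auto
        have "c (w i) = c v" using h r by simp
        then have "{v, w i} \<notin> E" using c wi v unfolding colouring_def by metis
        then show ?thesis using False wi unfolding closed_nbhd_def by auto
      qed
    qed
    then show ?thesis unfolding INFM_disj_distrib .
  next
    case 2
    then show ?thesis by (rule INFM_mono[THEN disjI2]) auto
  qed
next
  assume "(\<exists>\<^sub>\<infinity>i. w i = v \<and> w (Suc i) = v) \<or> (\<exists>\<^sub>\<infinity>i. w i \<in> V - closed_nbhd V E v)"
  then show "\<exists>\<^sub>\<infinity>i. (w i = v \<and> r i = c v) \<or> (w i \<in> V \<and> w i \<notin> closed_nbhd V E v)"
  proof
    assume "\<exists>\<^sub>\<infinity>i. w i = v \<and> w (Suc i) = v"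
    then have "\<exists>\<^sub>\<infinity>i. w (Suc i) = v \<and> r (Suc i) = c v"
      by (rule INFM_mono) (simp add: r)
    then have "\<exists>\<^sub>\<infinity>i. w i = v \<and> r i = c v"
      using INFM_Suc_iff[of "\<lambda>i. w i = v \<and> r i = c v"] by simp
    then show ?thesis by (rule INFM_mono) simp
  next
    assume "\<exists>\<^sub>\<infinity>i. w i \<in> V - closed_nbhd V E v"
    then show ?thesis by (rule INFM_mono) simp
  qed
qed

theorem lemma34:
  fixes V :: "'v set" and E :: "'v set set" and k :: nat
  assumes "finite_graph V E"
    and "0 < k"
    and "colourable V E k"
  shows "\<exists>(Q :: nat set) qi D (C :: nat set) col.
           is_gba Q V qi D C col \<and> deterministic Q V D \<and> complete_aut Q V D \<and>
           card Q = k \<and> gba_lang V qi D C col = L_G V E"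
proof -
  have fin: "finite V" using assms(1) unfolding finite_graph_def by blast
  obtain c where c: "colouring V E k c" using assms(3) unfolding colourable_def by blast
  obtain idx :: "'v \<Rightarrow> nat" where idx: "inj_on idx V"
    using finite_imp_inj_to_nat_seg[OF fin] by blast
  define N where "N = closed_nbhd V E"
  define Q where "Q = {1..k}"
  define D where "D = {(p, a, q). p \<in> Q \<and> a \<in> V \<and> q = c a}"
  define C where "C = idx ` V"
  define col where "col = (\<lambda>(p::nat, a, q::nat). idx ` {v \<in> V. (a = v \<and> p = c v) \<or> (a \<in> V \<and> a \<notin> N v)})"
  have cQ: "c a \<in> Q" if "a \<in> V" for a using c that unfolding colouring_def Q_def by blast
  have gba: "is_gba Q V 1 D C col"
    unfolding is_gba_def Q_def D_def C_def col_def using fin assms(2) cQ Q_def by auto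
  have det: "deterministic Q V D" unfolding deterministic_def D_def by auto
  have compl: "complete_aut Q V D" unfolding complete_aut_def D_def using cQ by auto
  have card: "card Q = k" unfolding Q_def by simp
  have lang: "gba_lang V 1 D C col = L_G V E"
  proof (intro set_eqI iffI)
    fix w assume "w \<in> gba_lang V 1 D C col"
    then obtain r where w: "w \<in> omega_words V" and run: "is_run 1 D w r" and acc: "gba_accepting C col w r"
      unfolding gba_lang_def by blast
    have rS: "r (Suc i) = c (w i)" for i using run unfolding is_run_def D_def by auto
    have "w \<in> L_v V E v" if v: "v \<in> V" for v
    proof -
      have "\<exists>\<^sub>\<infinity>i. idx v \<in> col (r i, w i, r (Suc i))" using acc v unfolding gba_accepting_def C_def by blast
      then have "\<exists>\<^sub>\<infinity>i. (w i = v \<and> r i = c v) \<or> (w i \<in> V \<and> w i \<notin> closed_nbhd V E v)"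
        by (rule INFM_mono) (use idx v in \<open>auto simp: col_def N_def inj_on_eq_iff\<close>)
      then show ?thesis using acc_iff[OF w v c rS] L_v_iff[OF w] by blast
    qed
    then show "w \<in> L_G V E" using w unfolding L_G_def by blast
  next
    fix w assume "w \<in> L_G V E"
    then have w: "w \<in> omega_words V" and L: "\<And>v. v \<in> V \<Longrightarrow> w \<in> L_v V E v" unfolding L_G_def by auto
    define r where "r = (\<lambda>i. case i of 0 \<Rightarrow> 1 | Suc j \<Rightarrow> c (w j))"
    have rS: "r (Suc i) = c (w i)" for i unfolding r_def by simp
    have wV: "w i \<in> V" for i using w unfolding omega_words_def by auto
    have rQ: "r i \<in> Q" for i using cQ wV assms(2) unfolding r_def Q_def by (cases i) auto
    have run: "is_run 1 D w r" unfolding is_run_def D_def using rQ wV rS by (auto simp: r_def)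
    have "\<exists>\<^sub>\<infinity>i. idx v \<in> col (r i, w i, r (Suc i))" if v: "v \<in> V" for v
    proof -
      have "\<exists>\<^sub>\<infinity>i. (w i = v \<and> r i = c v) \<or> (w i \<in> V \<and> w i \<notin> closed_nbhd V E v)"
        using acc_iff[OF w v c rS] L_v_iff[OF w] L[OF v] by blast
      then show ?thesis
        by (rule INFM_mono) (use v in \<open>auto simp: col_def N_def\<close>)
    qed
    then have "gba_accepting C col w r" unfolding gba_accepting_def C_def by blast
    then show "w \<in> gba_lang V 1 D C col" unfolding gba_lang_def using w run by blast
  qed
  show ?thesis using gba det compl card lang by blast
qed

end
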